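(* For every finite graph $G$, the graph $\mathcal{I}^1_{\mathrm{AR}}(G)$ admits a layering.
   Context: $\mathcal{I}^1_{\mathrm{AR}}(G)$ is the graph whose vertices are the nonempty independent sets of $G$, two being adjacent iff their symmetric difference has exactly one element. A layering of a graph $H$ is a partition of $V(H)$ into an ordered sequence of parts (layers) $V_1,\dots,V_p$ such that: (1) each layer is an independent set of $H$; (2) every edge of $H$ joins vertices in consecutive layers $V_i,V_{i+1}$; (3) for $2\le i\le p$, each vertex of $V_i$ has exactly $i$ neighbours in $V_{i-1}$; (4) for $1\le i\le p$, any two vertices of $V_i$ have at most one common neighbour in $V_{i-1}$ and at most one common neighbour in $V_{i+1}$. *)

theory Defs
  imports Main
begin

definition finite_graph :: "'a set \<Rightarrow> ('a \<Rightarrow> 'a \<Rightarrow> bool) \<Rightarrow> bool" where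
  "finite_graph V E \<longleftrightarrow> finite V \<and> (\<forall>x y. E x y \<longrightarrow> x \<in> V \<and> y \<in> V)
     \<and> (\<forall>x y. E x y \<longrightarrow> E y x) \<and> (\<forall>x. \<not> E x x)"

definition independent_set :: "'a set \<Rightarrow> ('a \<Rightarrow> 'a \<Rightarrow> bool) \<Rightarrow> 'a set \<Rightarrow> bool" where
  "independent_set V E S \<longleftrightarrow> S \<subseteq> V \<and> (\<forall>x\<in>S. \<forall>y\<in>S. \<not> E x y)"

definition IAR1_verts :: "'a set \<Rightarrow> ('a \<Rightarrow> 'a \<Rightarrow> bool) \<Rightarrow> 'a set set" where
  "IAR1_verts V E = {S. S \<noteq> {} \<and> independent_set V E S}"

definition IAR1_adj :: "'a set \<Rightarrow> ('a \<Rightarrow> 'a \<Rightarrow> bool) \<Rightarrow> 'a set \<Rightarrow> 'a set \<Rightarrow> bool" where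
  "IAR1_adj V E S T \<longleftrightarrow> S \<in> IAR1_verts V E \<and> T \<in> IAR1_verts V E
     \<and> card ((S - T) \<union> (T - S)) = 1"

definition layering :: "'b set \<Rightarrow> ('b \<Rightarrow> 'b \<Rightarrow> bool) \<Rightarrow> nat \<Rightarrow> (nat \<Rightarrow> 'b set) \<Rightarrow> bool" where
  "layering VH adj p L \<longleftrightarrow>
     \<comment> \<open>ordered partition of VH into nonempty parts\<close>
     (\<forall>i\<in>{1..p}. L i \<noteq> {}) \<and>
     (\<forall>i\<in>{1..p}. \<forall>j\<in>{1..p}. i \<noteq> j \<longrightarrow> L i \<inter> L j = {}) \<and>
     (\<Union>i\<in>{1..p}. L i) = VH \<and>
     \<comment> \<open>(1) each layer is independent\<close>
     (\<forall>i\<in>{1..p}. \<forall>x\<in>L i. \<forall>y\<in>L i. \<not> adj x y) \<and>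
     \<comment> \<open>(2) edges join consecutive layers\<close>
     (\<forall>x\<in>VH. \<forall>y\<in>VH. adj x y \<longrightarrow>
        (\<exists>i. 1 \<le> i \<and> i < p \<and> ((x \<in> L i \<and> y \<in> L (i+1)) \<or> (y \<in> L i \<and> x \<in> L (i+1))))) \<and>
     \<comment> \<open>(3) vertices of layer i have exactly i neighbours in layer i-1\<close>
     (\<forall>i. 2 \<le> i \<and> i \<le> p \<longrightarrow> (\<forall>v\<in>L i. card {u\<in>L (i-1). adj v u} = i)) \<and>
     \<comment> \<open>(4) at most one common neighbour in the previous / next layer\<close>
     (\<forall>i\<in>{1..p}. \<forall>x\<in>L i. \<forall>y\<in>L i. x \<noteq> y \<longrightarrow>
        (2 \<le> i \<longrightarrow> card {u\<in>L (i-1). adj x u \<and> adj y u} \<le> 1) \<and>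
        (i < p \<longrightarrow> card {u\<in>L (i+1). adj x u \<and> adj y u} \<le> 1))"

end

theory Submission
  imports Defs
begin

lemma symdiff_aux: assumes x: "(S - T) \<union> (T - S) = {x}" and "x \<in> S"
  shows "x \<notin> T" "S = insert x T"
  using assms by blast+

lemma symdiff_one:
  assumes "finite S" "finite T"
  shows "card ((S - T) \<union> (T - S)) = 1 \<longleftrightarrow>
    (\<exists>x. x \<notin> S \<and> T = insert x S) \<or> (\<exists>x. x \<notin> T \<and> S = insert x T)"
proof
  assume "card ((S - T) \<union> (T - S)) = 1"
  then obtain x where x: "(S - T) \<union> (T - S) = {x}" by (rule card_1_singletonE)
  show "(\<exists>x. x \<notin> S \<and> T = insert x S) \<or> (\<exists>x. x \<notin> T \<and> S = insert x T)"
  proof (cases "x \<in> S")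
    case True
    from symdiff_aux[OF x True] show ?thesis by blast
  next
    case False
    have x': "(T - S) \<union> (S - T) = {x}" using x by (simp add: Un_commute)
    have "x \<in> T" using x False by (metis Un_iff singletonI DiffD1)
    from symdiff_aux[OF x' this] False show ?thesis by blast
  qed
next
  assume "(\<exists>x. x \<notin> S \<and> T = insert x S) \<or> (\<exists>x. x \<notin> T \<and> S = insert x T)"
  then show "card ((S - T) \<union> (T - S)) = 1"
  proof
    assume "\<exists>x. x \<notin> S \<and> T = insert x S"
    then obtain x where "x \<notin> S" "T = insert x S" by blast
    then have "(S - T) \<union> (T - S) = {x}" by blast
    then show ?thesis by simp
  next
    assume "\<exists>x. x \<notin> T \<and> S = insert x T"
    then obtain x where "x \<notin> T" "S = insert x T" by blast
    then have "(S - T) \<union> (T - S) = {x}" by blast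
    then show ?thesis by simp
  qed
qed

theorem lemma4p3:
  fixes V :: "'a set" and E :: "'a \<Rightarrow> 'a \<Rightarrow> bool"
  assumes "finite_graph V E"
  shows "\<exists>p L. layering (IAR1_verts V E) (IAR1_adj V E) p L"
proof -
  define VH where "VH = IAR1_verts V E"
  define adj where "adj = IAR1_adj V E"
  have finV: "finite V" using assms by (simp add: finite_graph_def)
  have VHsub: "S \<in> VH \<Longrightarrow> S \<subseteq> V \<and> S \<noteq> {}" for S
    by (simp add: VH_def IAR1_verts_def independent_set_def)
  have finS: "S \<in> VH \<Longrightarrow> finite S" for S using VHsub finV finite_subset by blast
  have VHdown: "S \<in> VH \<Longrightarrow> T \<subseteq> S \<Longrightarrow> T \<noteq> {} \<Longrightarrow> T \<in> VH" for S T
    by (auto simp: VH_def IAR1_verts_def independent_set_def)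
  have finVH: "finite VH"
    using finV VHsub by (metis Pow_iff finite_Pow_iff finite_subset subsetI)
  have adjc: "adj S T \<longleftrightarrow> S \<in> VH \<and> T \<in> VH \<and>
      ((\<exists>x. x \<notin> S \<and> T = insert x S) \<or> (\<exists>x. x \<notin> T \<and> S = insert x T))" for S T
    using symdiff_one[of S T] finS unfolding adj_def IAR1_adj_def VH_def[symmetric] by blast
  define p where "p = Max (insert 0 (card ` VH))"
  define L where "L = (\<lambda>i. {S \<in> VH. card S = i})"
  have cardle: "S \<in> VH \<Longrightarrow> card S \<le> p" for S
    unfolding p_def using finVH by (simp add: Max_ge_iff)
  have cardpos: "S \<in> VH \<Longrightarrow> 1 \<le> card S" for S
    using finS VHsub by (metis One_nat_def Suc_leI card_gt_0_iff)
  have nonempty: "L i \<noteq> {}" if i: "i \<in> {1..p}" for i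
  proof -
    have "p \<in> insert 0 (card ` VH)" unfolding p_def using finVH by (intro Max_in) auto
    with i obtain S0 where S0: "S0 \<in> VH" "card S0 = p" by auto
    obtain T where T: "T \<subseteq> S0" "card T = i" using i S0 obtain_subset_with_card_n[of i S0] by auto
    have "T \<noteq> {}" using T i by auto
    then have "T \<in> VH" using VHdown S0 T by blast
    then show ?thesis using T unfolding L_def by blast
  qed
  have lay: "layering VH adj p L"
    unfolding layering_def
  proof (intro conjI)
    show "\<forall>i\<in>{1..p}. L i \<noteq> {}" using nonempty by blast
    show "\<forall>i\<in>{1..p}. \<forall>j\<in>{1..p}. i \<noteq> j \<longrightarrow> L i \<inter> L j = {}" unfolding L_def by auto
    show "(\<Union>i\<in>{1..p}. L i) = VH"
      unfolding L_def using cardle cardpos by fastforce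
    show "\<forall>i\<in>{1..p}. \<forall>x\<in>L i. \<forall>y\<in>L i. \<not> adj x y"
    proof (intro ballI notI)
      fix i x y assume x: "x \<in> L i" and y: "y \<in> L i" and a: "adj x y"
      have cx: "card x = i" "x \<in> VH" and cy: "card y = i" "y \<in> VH" using x y unfolding L_def by auto
      have fx: "finite x" using finS cx(2) by blast
      have fy: "finite y" using finS cy(2) by blast
      from a consider b where "b \<notin> x" "y = insert b x" | b where "b \<notin> y" "x = insert b y"
        using adjc by blast
      then show False
      proof cases
        case 1 then have "card y = card x + 1" using fx by simp
        then show False using cx cy by simp
      next
        case 2 then have "card x = card y + 1" using fy by simp
        then show False using cx cy by simp
      qed
    qed
    show "\<forall>x\<in>VH. \<forall>y\<in>VH. adj x y \<longrightarrow>
        (\<exists>i. 1 \<le> i \<and> i < p \<and> ((x \<in> L i \<and> y \<in> L (i+1)) \<or> (y \<in> L i \<and> x \<in> L (i+1))))"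
    proof (intro ballI impI)
      fix x y assume xy: "x \<in> VH" "y \<in> VH" "adj x y"
      then consider a where "a \<notin> x" "y = insert a x" | a where "a \<notin> y" "x = insert a y"
        using adjc by blast
      then show "\<exists>i. 1 \<le> i \<and> i < p \<and> ((x \<in> L i \<and> y \<in> L (i+1)) \<or> (y \<in> L i \<and> x \<in> L (i+1)))"
      proof cases
        case 1
        then have "card y = card x + 1" using finS xy by simp
        then show ?thesis using xy cardle[of y] cardpos[of x] unfolding L_def
          by (intro exI[of _ "card x"]) auto
      next
        case 2
        then have "card x = card y + 1" using finS xy by simp
        then show ?thesis using xy cardle[of x] cardpos[of y] unfolding L_def
          by (intro exI[of _ "card y"]) auto
      qed
    qed
    show "\<forall>i. 2 \<le> i \<and> i \<le> p \<longrightarrow> (\<forall>v\<in>L i. card {u\<in>L (i-1). adj v u} = i)"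
    proof (intro allI impI ballI)
      fix i v assume i: "2 \<le> i \<and> i \<le> p" and v: "v \<in> L i"
      have vVH: "v \<in> VH" and cv: "card v = i" using v unfolding L_def by auto
      have fv: "finite v" using finS vVH by blast
      have eq: "{u\<in>L (i-1). adj v u} = (\<lambda>a. v - {a}) ` v"
      proof (rule set_eqI, rule iffI)
        fix u assume u: "u \<in> {u\<in>L (i-1). adj v u}"
        then have cu: "card u = i - 1" and uVH: "u \<in> VH" and auv: "adj v u" unfolding L_def by auto
        have fu: "finite u" using finS uVH by blast
        from auv consider b where "b \<notin> v" "u = insert b v" | b where "b \<notin> u" "v = insert b u"
          using adjc by blast
        then show "u \<in> (\<lambda>a. v - {a}) ` v"
        proof cases
          case 1 then have "card u = card v + 1" using fv by simp
          then have False using cu cv i by simp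
          then show ?thesis ..
        next
          case 2 then have "u = v - {b}" "b \<in> v" by auto
          then show ?thesis by blast
        qed
      next
        fix u assume "u \<in> (\<lambda>a. v - {a}) ` v"
        then obtain a where a: "a \<in> v" "u = v - {a}" by blast
        then have cu: "card u = i - 1" using cv fv by simp
        then have "card u > 0" using i by simp
        then have "u \<noteq> {}" by (metis card.empty less_irrefl)
        moreover have "u \<subseteq> v" using a by blast
        ultimately have uVH: "u \<in> VH" using VHdown[OF vVH] by blast
        have "a \<notin> u" "v = insert a u" using a by auto
        then have "adj v u" using adjc vVH uVH by blast
        then show "u \<in> {u\<in>L (i-1). adj v u}" using cu uVH unfolding L_def by simp
      qed
      have "inj_on (\<lambda>a. v - {a}) v" by (auto simp: inj_on_def)
      then have "card ((\<lambda>a. v - {a}) ` v) = card v" by (rule card_image)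
      then show "card {u\<in>L (i-1). adj v u} = i" using eq cv by simp
    qed
    show "\<forall>i\<in>{1..p}. \<forall>x\<in>L i. \<forall>y\<in>L i. x \<noteq> y \<longrightarrow>
        (2 \<le> i \<longrightarrow> card {u\<in>L (i-1). adj x u \<and> adj y u} \<le> 1) \<and>
        (i < p \<longrightarrow> card {u\<in>L (i+1). adj x u \<and> adj y u} \<le> 1)"
    proof (intro ballI impI conjI)
      fix i x y assume i: "i \<in> {1..p}" and x: "x \<in> L i" and y: "y \<in> L i" and ne: "x \<noteq> y"
      have fx: "finite x" and fy: "finite y" and cx: "card x = i" and cy: "card y = i"
        and xV: "x \<in> VH" and yV: "y \<in> VH"
        using x y finS unfolding L_def by auto
      {
        assume "2 \<le> i"
        have "{u\<in>L (i-1). adj x u \<and> adj y u} \<subseteq> {x \<inter> y}"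
        proof
          fix u assume u: "u \<in> {u\<in>L (i-1). adj x u \<and> adj y u}"
          then have cu: "card u = i - 1" "u \<in> VH" unfolding L_def by auto
          from u have "(\<exists>a. a \<notin> x \<and> u = insert a x) \<or> (\<exists>a. a \<notin> u \<and> x = insert a u)"
            using adjc by blast
          then obtain a where a: "a \<notin> u" "x = insert a u"
            using cu cx fx \<open>2 \<le> i\<close> by (auto simp: card_insert_if)
          from u have "(\<exists>a. a \<notin> y \<and> u = insert a y) \<or> (\<exists>a. a \<notin> u \<and> y = insert a u)"
            using adjc by blast
          then obtain b where b: "b \<notin> u" "y = insert b u"
            using cu cy fy \<open>2 \<le> i\<close> by (auto simp: card_insert_if)
          have "a \<noteq> b" using a b ne by auto
          then have "u = x \<inter> y" using a b by auto
          then show "u \<in> {x \<inter> y}" by simp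
        qed
        then have "card {u\<in>L (i-1). adj x u \<and> adj y u} \<le> card {x \<inter> y}"
          by (intro card_mono) simp_all
        then show "card {u\<in>L (i-1). adj x u \<and> adj y u} \<le> 1" by simp
      }
      {
        assume "i < p"
        have "{u\<in>L (i+1). adj x u \<and> adj y u} \<subseteq> {x \<union> y}"
        proof
          fix u assume u: "u \<in> {u\<in>L (i+1). adj x u \<and> adj y u}"
          then have cu: "card u = i + 1" "u \<in> VH" unfolding L_def by auto
          have fu: "finite u" using cu finS by blast
          from u have "(\<exists>a. a \<notin> x \<and> u = insert a x) \<or> (\<exists>a. a \<notin> u \<and> x = insert a u)"
            using adjc by blast
          then obtain a where a: "a \<notin> x" "u = insert a x"
            using cu cx fu by (auto simp: card_insert_if)
          from u have "(\<exists>a. a \<notin> y \<and> u = insert a y) \<or> (\<exists>a. a \<notin> u \<and> y = insert a u)"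
            using adjc by blast
          then obtain b where b: "b \<notin> y" "u = insert b y"
            using cu cy fu by (auto simp: card_insert_if)
          have "a \<noteq> b" using a b ne by auto
          then have "u = x \<union> y" using a b by auto
          then show "u \<in> {x \<union> y}" by simp
        qed
        then have "card {u\<in>L (i+1). adj x u \<and> adj y u} \<le> card {x \<union> y}"
          by (intro card_mono) simp_all
        then show "card {u\<in>L (i+1). adj x u \<and> adj y u} \<le> 1" by simp
      }
    qed
  qed
  then show ?thesis unfolding VH_def adj_def by blast
qed

end
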